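(* Let $\gamma_a,\gamma_s>0$, $\sigma_B>0$, $q>0$, $\lambda>0$, $\varepsilon_a\in(0,2)$, and let $\beta_s$ be the piecewise linear coalbedo described in the context. Then the system \[ \gamma_a T_a'=-\lambda(T_a-T_s)+\varepsilon_a\sigma_B|T_s|^3T_s-2\varepsilon_a\sigma_B|T_a|^3T_a,\qquad \gamma_s T_s'=-\lambda(T_s-T_a)-\sigma_B|T_s|^3T_s+\varepsilon_a\sigma_B|T_a|^3T_a+q\beta_s(T_s) \] has at least one equilibrium point.
   Context: The coalbedo is $\beta_s(T)=\beta_{s,-}$ for $T\le T_{s,-}$, $\beta_s(T)=\beta_{s,-}+(\beta_{s,+}-\beta_{s,-})\frac{T-T_{s,-}}{T_{s,+}-T_{s,-}}$ for $T\in[T_{s,-},T_{s,+}]$, and $\beta_s(T)=\beta_{s,+}$ for $T\ge T_{s,+}$, where $T_{s,+}>T_{s,-}>0$ and $\beta_{s,+}>\beta_{s,-}>0$. An equilibrium point is a point $(T_a,T_s)\in[0,\infty)^2$ at which both right-hand sides vanish. *)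

theory Defs
  imports Complex_Main
begin

definition coalbedo :: "real \<Rightarrow> real \<Rightarrow> real \<Rightarrow> real \<Rightarrow> real \<Rightarrow> real" where
  "coalbedo Tm Tp bm bp T =
     (if T \<le> Tm then bm
      else if T \<le> Tp then bm + (bp - bm) * (T - Tm) / (Tp - Tm)
      else bp)"

end

theory Submission
  imports Defs
begin

lemma coalbedo_alt:
  assumes "Tm < Tp"
  shows "coalbedo Tm Tp bm bp T = bm + (bp - bm) * max 0 (min 1 ((T - Tm) / (Tp - Tm)))"
proof -
  have d: "Tp - Tm > 0" using assms by simp
  show ?thesis
  proof (cases "T \<le> Tm")
    case True
    then have "(T - Tm) / (Tp - Tm) \<le> 0" using d by (simp add: divide_nonpos_pos)
    then show ?thesis using True by (simp add: coalbedo_def)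
  next
    case False
    note F = False
    show ?thesis
    proof (cases "T \<le> Tp")
      case True
      have "(T - Tm) / (Tp - Tm) \<le> 1" using True d by simp
      moreover have "(T - Tm) / (Tp - Tm) \<ge> 0" using F d by simp
      ultimately show ?thesis using True F by (simp add: coalbedo_def)
    next
      case False
      have "(T - Tm) / (Tp - Tm) \<ge> 1" using False d by simp
      then show ?thesis using False F by (simp add: coalbedo_def)
    qed
  qed
qed

lemma coalbedo_cont:
  assumes "Tm < Tp"
  shows "continuous_on S (coalbedo Tm Tp bm bp)"
  unfolding coalbedo_alt[OF assms, abs_def]
  by (intro continuous_intros) (use assms in auto)

lemma coalbedo_le:
  assumes "Tm < Tp" "bm < bp"
  shows "coalbedo Tm Tp bm bp T \<le> bp"
proof -
  have "max 0 (min 1 ((T - Tm) / (Tp - Tm))) \<le> 1" by simp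
  then have "(bp - bm) * max 0 (min 1 ((T - Tm) / (Tp - Tm))) \<le> (bp - bm)"
    using assms by (simp add: mult_left_le)
  then show ?thesis unfolding coalbedo_alt[OF assms(1)] by simp
qed

lemma abs4: "(x::real) \<ge> 0 \<Longrightarrow> \<bar>x\<bar>^3 * x = x^4"
  by (simp add: power_Suc2 power_numeral_reduce)

theorem lemma6p1:
  fixes gamma_a gamma_s sigma_B q lam eps_a Tm Tp bm bp :: real
  assumes "gamma_a > 0" "gamma_s > 0" "sigma_B > 0" "q > 0" "lam > 0"
    and "0 < eps_a" "eps_a < 2"
    and "0 < Tm" "Tm < Tp" "0 < bm" "bm < bp"
  shows "\<exists>Ta Ts. Ta \<ge> 0 \<and> Ts \<ge> 0 \<and>
     - lam * (Ta - Ts) + eps_a * sigma_B * \<bar>Ts\<bar>^3 * Ts - 2 * eps_a * sigma_B * \<bar>Ta\<bar>^3 * Ta = 0 \<and>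
     - lam * (Ts - Ta) - sigma_B * \<bar>Ts\<bar>^3 * Ts + eps_a * sigma_B * \<bar>Ta\<bar>^3 * Ta
       + q * coalbedo Tm Tp bm bp Ts = 0"
proof -
  define s where "s = sigma_B"
  define e where "e = eps_a"
  have s: "s > 0" and e: "e > 0" "e < 2" using assms by (auto simp: s_def e_def)
  define k where "k x = lam * x + 2*e*s*x^4" for x :: real
  define h where "h x = lam * x + e*s*x^4" for x :: real
  define c where "c = s * (1 - e/2)"
  have c: "c > 0" using s e by (simp add: c_def)
  define T1 where "T1 = 1 + q * bp / c"
  have T1: "T1 \<ge> 1" using c assms by (simp add: T1_def)
  have kmono: "k x < k y" if "0 \<le> x" "x < y" for x y
  proof -
    have "x^4 < y^4" using that by (intro power_strict_mono) auto
    then have "2*e*s*x^4 < 2*e*s*y^4" using e s by simp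
    then show ?thesis using that assms(5) unfolding k_def
      by (smt (verit, best) mult_strict_left_mono)
  qed
  have inj: "inj_on k {0..T1}"
    by (rule inj_onI) (metis atLeastAtMost_iff kmono linorder_neqE_linordered_idom order_less_irrefl)
  define g where "g = inv_into {0..T1} k"
  have kc: "continuous_on {0..T1} k" unfolding k_def by (intro continuous_intros)
  have gc: "continuous_on (k ` {0..T1}) g"
    by (rule continuous_on_inv[OF kc]) (auto simp: g_def inv_into_f_f[OF inj])
  have hk: "h x \<le> k x" if "x \<ge> 0" for x
    using that e s unfolding h_def k_def by simp
  have hin: "h x \<in> k ` {0..T1}" if "0 \<le> x" "x \<le> T1" for x
  proof -
    have "k 0 \<le> h x" using that e s assms(5) unfolding h_def k_def by simp
    moreover have "h x \<le> k T1"
      using hk[of x] kmono[of x T1] that by (cases "x = T1") auto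
    ultimately obtain y where "0 \<le> y" "y \<le> T1" "k y = h x"
      using IVT'[of k 0 "h x" T1] kc T1 by auto
    then show ?thesis by (metis atLeastAtMost_iff image_eqI)
  qed
  define Ta where "Ta x = g (h x)" for x
  have hc: "continuous_on {0..T1} h" unfolding h_def by (intro continuous_intros)
  have Tac: "continuous_on {0..T1} Ta"
    unfolding Ta_def
    by (rule continuous_on_compose2[OF gc hc]) (auto intro: hin)
  have Taprop: "0 \<le> Ta x \<and> Ta x \<le> T1 \<and> k (Ta x) = h x" if xx: "0 \<le> x" "x \<le> T1" for x
  proof -
    obtain y where y: "y \<in> {0..T1}" "h x = k y" using hin[OF xx] by auto
    have "Ta x = y" unfolding Ta_def g_def y(2) using inv_into_f_f[OF inj y(1)] .
    then show ?thesis using y by auto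
  qed
  have Tale: "Ta x \<le> x" if "0 \<le> x" "x \<le> T1" for x
  proof (rule ccontr)
    assume "\<not> Ta x \<le> x"
    then have "k x < k (Ta x)" using kmono that by auto
    then show False using Taprop[OF that] hk[of x] that by simp
  qed
  define F where "F x = - lam * (x - Ta x) - s * x^4 + e * s * (Ta x)^4 + q * coalbedo Tm Tp bm bp x" for x
  have Fc: "continuous_on {0..T1} F" unfolding F_def
    by (intro continuous_intros Tac continuous_on_subset[OF coalbedo_cont[OF assms(9)]]) auto
  have Ta0: "Ta 0 = 0"
  proof -
    have "Ta 0 \<le> 0" using Tale[of 0] T1 by simp
    then show ?thesis using Taprop[of 0] T1 by simp
  qed
  have F0: "F 0 \<ge> 0" unfolding F_def Ta0 using assms(8,10,4)
    by (simp add: coalbedo_def)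
  have FT1: "F T1 \<le> 0"
  proof -
    have kh: "2*e*s*(Ta T1)^4 = lam*(T1 - Ta T1) + e*s*T1^4"
      using Taprop[of T1] T1 unfolding k_def h_def by (simp add: algebra_simps)
    have F': "F T1 = - lam * (T1 - Ta T1)/2 - c * T1^4 + q * coalbedo Tm Tp bm bp T1"
    proof -
      have e2: "e*s*(Ta T1)^4 = (lam*(T1 - Ta T1) + e*s*T1^4)/2" using kh by simp
      show ?thesis unfolding F_def c_def e2 by (simp add: field_simps)
    qed
    have "T1 \<le> T1^4" using T1 by (simp add: self_le_power)
    then have "c * T1 \<le> c * T1^4" using c by simp
    moreover have "c * T1 \<ge> q * bp" unfolding T1_def using c assms
      by (simp add: algebra_simps)
    moreover have "q * coalbedo Tm Tp bm bp T1 \<le> q * bp"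
      using coalbedo_le[OF assms(9,11)] assms(4) by simp
    moreover have "lam * (T1 - Ta T1) \<ge> 0" using Tale[of T1] T1 assms(5) by simp
    ultimately show ?thesis unfolding F' by linarith
  qed
  obtain x where x: "0 \<le> x" "x \<le> T1" "F x = 0"
    using IVT2'[of F T1 0 0, OF FT1 F0 _ Fc] T1 by auto
  have kx: "lam * Ta x + 2*e*s*(Ta x)^4 = lam * x + e*s*x^4"
    using Taprop[OF x(1,2)] unfolding k_def h_def by simp
  show ?thesis
    apply (rule exI[of _ "Ta x"], rule exI[of _ x])
  proof -
    have t0: "Ta x \<ge> 0" using Taprop[OF x(1,2)] by simp
    have p4: "\<And>a y::real. a * y^3 * y = a * y^4" by (simp add: power_numeral_reduce)
    show "Ta x \<ge> 0 \<and> x \<ge> 0 \<and>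
     - lam * (Ta x - x) + eps_a * sigma_B * \<bar>x\<bar>^3 * x - 2 * eps_a * sigma_B * \<bar>Ta x\<bar>^3 * Ta x = 0 \<and>
     - lam * (x - Ta x) - sigma_B * \<bar>x\<bar>^3 * x + eps_a * sigma_B * \<bar>Ta x\<bar>^3 * Ta x
       + q * coalbedo Tm Tp bm bp x = 0"
      unfolding abs_of_nonneg[OF x(1)] abs_of_nonneg[OF t0] p4
      using t0 x kx unfolding F_def s_def e_def by (simp add: algebra_simps)
  qed
qed

end
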